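(* Let $(\Xi,d_\Xi)$ be a metric space, let $\{P^\nu\}_{\nu\in\mathbb{N}}$ be probabilities on $(\Xi,\mathcal{B}(\Xi))$ converging weakly to a probability $P$, and let $\{h^\nu\}_{\nu\in\mathbb{N}}$ be measurable $\overline{\mathbb{R}}$-valued functions on $\Xi$ such that $$\limsup_{K\to+\infty}\ \limsup_{\nu\to+\infty}\mathbb{E}^{P^\nu}\big[h^\nu(\xi)\,\mathbb{1}\{\xi:h^\nu(\xi)\ge K\}\big]=0.$$ Then $$\limsup_{\nu\to+\infty}\mathbb{E}^{P^\nu}\big[h^\nu(\xi)\big]\ \le\ \mathbb{E}^{P}\Big[\limsup_{(\nu,\zeta)\to(+\infty,\xi)}h^\nu(\zeta)\Big].$$
   Context: $\overline{\mathbb{R}}=\mathbb{R}\cup\{-\infty,+\infty\}$; weak convergence means $\int\varphi\,dP^\nu\to\int\varphi\,dP$ for all bounded continuous $\varphi$. For a probability $\mu$ and measurable $\overline{\mathbb{R}}$-valued $g$, $\mathbb{E}^\mu[g]:=\int g_+\,d\mu-\int g_-\,d\mu$ with $g_+=\max\{g,0\}$, $g_-=-\min\{g,0\}$ and conventions $+\infty-\alpha=+\infty$ for all $\alpha\in\overline{\mathbb{R}}$ and $\beta-(+\infty)=-\infty$ for $\beta\in\mathbb{R}$. $\mathbb{1}\{B\}$ is the indicator of $B$. $\limsup_{(\nu,\zeta)\to(+\infty,\xi)}h^\nu(\zeta):=\lim_{\delta\downarrow0}\lim_{N\to\infty}\sup\{h^\nu(\zeta):\nu\ge N,\ d_\Xi(\zeta,\xi)<\delta\}$.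 *)

theory Defs
  imports "HOL-Probability.Probability"
begin

text \<open>Extended expectation E^mu[g] = int g_+ - int g_-, with the conventions
  +infinity - alpha = +infinity (for all alpha) and beta - (+infinity) = -infinity.\<close>
definition ext_expect :: "'a measure \<Rightarrow> ('a \<Rightarrow> ereal) \<Rightarrow> ereal" where
  "ext_expect M g =
     (let pos = enn2ereal (\<integral>\<^sup>+ x. e2ennreal (max (g x) 0) \<partial>M);
          neg = enn2ereal (\<integral>\<^sup>+ x. e2ennreal (- min (g x) 0) \<partial>M)
      in if pos = \<infinity> then \<infinity> else pos - neg)"

definition weak_conv :: "(nat \<Rightarrow> 'a::metric_space measure) \<Rightarrow> 'a measure \<Rightarrow> bool" where
  "weak_conv Pn P \<longleftrightarrow>
     (\<forall>\<phi> :: 'a \<Rightarrow> real. continuous_on UNIV \<phi> \<and> bounded (range \<phi>) \<longrightarrow>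
        (\<lambda>n. \<integral>x. \<phi> x \<partial>(Pn n)) \<longlonglongrightarrow> (\<integral>x. \<phi> x \<partial>P))"

definition joint_limsup :: "(nat \<Rightarrow> 'a::metric_space \<Rightarrow> ereal) \<Rightarrow> 'a \<Rightarrow> ereal" where
  "joint_limsup h \<xi> =
     Lim (at_right (0::real))
       (\<lambda>\<delta>. lim (\<lambda>N. Sup {h \<nu> \<zeta> | \<nu> \<zeta>. \<nu> \<ge> N \<and> dist \<zeta> \<xi> < \<delta>}))"

end

theory Submission
  imports Defs "HOL-Analysis.Lipschitz"
begin

lemma ext_expect_mono:
  assumes "\<And>x. f x \<le> g x"
  shows "ext_expect M f \<le> ext_expect M g"
proof -
  have p: "(\<integral>\<^sup>+x. e2ennreal (max (f x) 0) \<partial>M) \<le> (\<integral>\<^sup>+x. e2ennreal (max (g x) 0) \<partial>M)"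
    by (intro nn_integral_mono e2ennreal_mono max.mono assms order_refl)
  have n: "(\<integral>\<^sup>+x. e2ennreal (- min (g x) 0) \<partial>M) \<le> (\<integral>\<^sup>+x. e2ennreal (- min (f x) 0) \<partial>M)"
    by (intro nn_integral_mono e2ennreal_mono ereal_minus_le_minus[THEN iffD2] min.mono assms order_refl)
  show ?thesis
    unfolding ext_expect_def Let_def
    using p n by (auto simp: less_eq_ennreal.rep_eq intro!: ereal_minus_mono)
qed

lemma ext_expect_real:
  fixes f :: "'a \<Rightarrow> real"
  assumes f: "integrable M f"
  shows "ext_expect M (\<lambda>x. ereal (f x)) = ereal (integral\<^sup>L M f)"
proof -
  have e1: "e2ennreal (max (ereal (f x)) 0) = ennreal (f x)" for x
    by (cases "f x \<le> 0") (auto simp: max_def ennreal_neg e2ennreal_neg)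
  have e2: "e2ennreal (- min (ereal (f x)) 0) = ennreal (- f x)" for x
    by (cases "f x \<le> 0") (auto simp: min_def ennreal_neg)
  have fin1: "(\<integral>\<^sup>+x. ennreal (f x) \<partial>M) \<noteq> \<infinity>" and fin2: "(\<integral>\<^sup>+x. ennreal (- f x) \<partial>M) \<noteq> \<infinity>"
    using f unfolding real_integrable_def by auto
  obtain a where a: "(\<integral>\<^sup>+x. ennreal (f x) \<partial>M) = ennreal a" "a \<ge> 0"
    using fin1 by (cases "(\<integral>\<^sup>+x. ennreal (f x) \<partial>M)" rule: ennreal_cases) auto
  obtain b where b: "(\<integral>\<^sup>+x. ennreal (- f x) \<partial>M) = ennreal b" "b \<ge> 0"
    using fin2 by (cases "(\<integral>\<^sup>+x. ennreal (- f x) \<partial>M)" rule: ennreal_cases) auto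
  show ?thesis
    unfolding ext_expect_def Let_def e1 e2 real_lebesgue_integral_def[OF f] a b
    using a(2) b(2) by simp
qed

lemma ext_expect_decseq:
  fixes f :: "nat \<Rightarrow> 'a \<Rightarrow> ereal"
  assumes meas[measurable]: "\<And>m. f m \<in> borel_measurable M"
    and dec: "\<And>m x. f (Suc m) x \<le> f m x"
    and fin: "(\<integral>\<^sup>+x. e2ennreal (max (f 0 x) 0) \<partial>M) < \<infinity>"
  shows "(\<lambda>m. ext_expect M (f m)) \<longlonglongrightarrow> ext_expect M (\<lambda>x. INF m. f m x)"
proof -
  define \<Phi> where "\<Phi> x = (INF m. f m x)" for x
  have ds: "decseq (\<lambda>m. f m x)" for x by (intro decseq_SucI dec)
  have lim: "(\<lambda>m. f m x) \<longlonglongrightarrow> \<Phi> x" for x unfolding \<Phi>_def by (rule LIMSEQ_INF[OF ds])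
  have P1: "e2ennreal (max (\<Phi> x) 0) = (INF m. e2ennreal (max (f m x) 0))" for x
  proof (rule LIMSEQ_unique)
    show "(\<lambda>m. e2ennreal (max (f m x) 0)) \<longlonglongrightarrow> e2ennreal (max (\<Phi> x) 0)"
      by (intro tendsto_e2ennrealI tendsto_max lim tendsto_const)
    show "(\<lambda>m. e2ennreal (max (f m x) 0)) \<longlonglongrightarrow> (INF m. e2ennreal (max (f m x) 0))"
      by (intro LIMSEQ_INF decseq_SucI e2ennreal_mono max.mono dec order_refl)
  qed
  have P2: "e2ennreal (- min (\<Phi> x) 0) = (SUP m. e2ennreal (- min (f m x) 0))" for x
  proof (rule LIMSEQ_unique)
    show "(\<lambda>m. e2ennreal (- min (f m x) 0)) \<longlonglongrightarrow> e2ennreal (- min (\<Phi> x) 0)"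
      by (intro tendsto_e2ennrealI tendsto_uminus_ereal tendsto_min lim tendsto_const)
    show "(\<lambda>m. e2ennreal (- min (f m x) 0)) \<longlonglongrightarrow> (SUP m. e2ennreal (- min (f m x) 0))"
      by (intro LIMSEQ_SUP incseq_SucI e2ennreal_mono ereal_minus_le_minus[THEN iffD2] min.mono dec order_refl)
  qed
  define p where "p m = (\<integral>\<^sup>+x. e2ennreal (max (f m x) 0) \<partial>M)" for m
  define n where "n m = (\<integral>\<^sup>+x. e2ennreal (- min (f m x) 0) \<partial>M)" for m
  have pdec: "decseq p" unfolding p_def
    by (intro decseq_SucI nn_integral_mono e2ennreal_mono max.mono dec order_refl)
  have ninc: "incseq n" unfolding n_def
    by (intro incseq_SucI nn_integral_mono e2ennreal_mono ereal_minus_le_minus[THEN iffD2] min.mono dec order_refl)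
  have pos: "(\<integral>\<^sup>+x. e2ennreal (max (\<Phi> x) 0) \<partial>M) = (INF m. p m)"
    unfolding P1 p_def
    by (rule nn_integral_monotone_convergence_INF_decseq[where i=0])
       (use fin in \<open>auto intro!: decseq_SucI le_funI e2ennreal_mono max.mono dec\<close>)
  have neg: "(\<integral>\<^sup>+x. e2ennreal (- min (\<Phi> x) 0) \<partial>M) = (SUP m. n m)"
    unfolding P2 n_def
    by (rule nn_integral_monotone_convergence_SUP)
       (auto intro!: incseq_SucI le_funI e2ennreal_mono ereal_minus_le_minus[THEN iffD2] min.mono dec)
  have pfin: "p m < \<infinity>" for m
    using pdec fin unfolding p_def decseq_def by (meson le0 le_less_trans)
  have pIfin: "(INF m. p m) < \<infinity>"
    using pfin[of 0] by (meson INF_lower UNIV_I le_less_trans)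
  have eq: "ext_expect M (f m) = enn2ereal (p m) - enn2ereal (n m)" for m
    using pfin[of m] unfolding ext_expect_def Let_def p_def n_def by auto
  have eq2: "ext_expect M \<Phi> = enn2ereal (INF m. p m) - enn2ereal (SUP m. n m)"
    using pIfin unfolding ext_expect_def Let_def pos neg by auto
  have "(\<lambda>m. enn2ereal (p m) - enn2ereal (n m)) \<longlonglongrightarrow> enn2ereal (INF m. p m) - enn2ereal (SUP m. n m)"
    apply (intro tendsto_diff_ereal_general tendsto_enn2erealI LIMSEQ_INF LIMSEQ_SUP pdec ninc)
    using pIfin by auto
  then show ?thesis unfolding eq eq2[unfolded \<Phi>_def] .
qed

lemma ext_expect_split:
  fixes h :: "'a \<Rightarrow> ereal" and K :: real
  assumes M: "prob_space M" and [measurable]: "h \<in> borel_measurable M" and K: "K > 0"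
  shows "ext_expect M h \<le> ext_expect M (\<lambda>x. min (h x) (ereal K))
           + ext_expect M (\<lambda>x. if h x \<ge> ereal K then h x else 0)"
proof -
  define g where "g = (\<lambda>x. min (h x) (ereal K))"
  define t where "t = (\<lambda>x. if h x \<ge> ereal K then h x else 0)"
  have [measurable]: "g \<in> borel_measurable M" "t \<in> borel_measurable M"
    unfolding g_def t_def by measurable
  define ph where "ph = (\<integral>\<^sup>+x. e2ennreal (max (h x) 0) \<partial>M)"
  define pg where "pg = (\<integral>\<^sup>+x. e2ennreal (max (g x) 0) \<partial>M)"
  define pt where "pt = (\<integral>\<^sup>+x. e2ennreal (max (t x) 0) \<partial>M)"
  define nh where "nh = (\<integral>\<^sup>+x. e2ennreal (- min (h x) 0) \<partial>M)"
  have ng: "(\<integral>\<^sup>+x. e2ennreal (- min (g x) 0) \<partial>M) = nh"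
    unfolding nh_def g_def using K
    by (intro nn_integral_cong arg_cong[where f=e2ennreal] arg_cong[where f=uminus])
       (case_tac "h x"; auto simp: min_def)
  have nt: "(\<integral>\<^sup>+x. e2ennreal (- min (t x) 0) \<partial>M) = 0"
    unfolding t_def using K
    by (intro nn_integral_zero' AE_I2) (case_tac "h x"; auto simp: min_def e2ennreal_neg)
  have "ph \<le> (\<integral>\<^sup>+x. e2ennreal (max (g x) 0) + e2ennreal (max (t x) 0) \<partial>M)"
    unfolding ph_def
  proof (intro nn_integral_mono)
    fix x
    show "e2ennreal (max (h x) 0) \<le> e2ennreal (max (g x) 0) + e2ennreal (max (t x) 0)"
    proof (cases "h x \<ge> ereal K")
      case True
      then have "max (t x) 0 = max (h x) 0" unfolding t_def by simp
      then show ?thesis by (simp add: add_increasing)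
    next
      case False
      then have "g x = h x" unfolding g_def by simp
      then show ?thesis by (simp add: add_increasing2)
    qed
  qed
  also have "\<dots> = pg + pt" unfolding pg_def pt_def by (rule nn_integral_add) auto
  finally have php: "ph \<le> pg + pt" .
  have "pg \<le> (\<integral>\<^sup>+x. ennreal K \<partial>M)"
    unfolding pg_def g_def
  proof (intro nn_integral_mono)
    fix x
    have "max (min (h x) (ereal K)) 0 \<le> ereal K" using K by simp
    then show "e2ennreal (max (min (h x) (ereal K)) 0) \<le> ennreal K"
      using e2ennreal_mono by fastforce
  qed
  also have "\<dots> = ennreal K" using M by (simp add: prob_space.emeasure_space_1)
  finally have "pg \<le> ennreal K" .
  then have pgfin: "pg < \<infinity>" using ennreal_less_top[of K] unfolding infinity_ennreal_def by (rule le_less_trans)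
  have eh: "ext_expect M h = (if enn2ereal ph = \<infinity> then \<infinity> else enn2ereal ph - enn2ereal nh)"
    unfolding ext_expect_def Let_def ph_def nh_def ..
  have eg: "ext_expect M g = enn2ereal pg - enn2ereal nh"
    using pgfin unfolding ext_expect_def Let_def pg_def ng by auto
  have et: "ext_expect M t = enn2ereal pt"
    unfolding ext_expect_def Let_def pt_def nt by (auto simp: zero_ennreal.rep_eq)
  have php': "enn2ereal ph \<le> enn2ereal pg + enn2ereal pt"
    using php by (simp add: less_eq_ennreal.rep_eq plus_ennreal.rep_eq)
  have pg0: "0 \<le> enn2ereal pg" "enn2ereal pg \<noteq> \<infinity>" using pgfin by auto
  have pt0: "0 \<le> enn2ereal pt" and nh0: "0 \<le> enn2ereal nh" by auto
  have "(if enn2ereal ph = \<infinity> then \<infinity> else enn2ereal ph - enn2ereal nh) \<le> (enn2ereal pg - enn2ereal nh) + enn2ereal pt"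
  proof (cases "enn2ereal pt = \<infinity>")
    case True
    then show ?thesis by simp
  next
    case False
    then obtain b where b: "enn2ereal pt = ereal b" using pt0 by (cases "enn2ereal pt") auto
    obtain a where a: "enn2ereal pg = ereal a" using pg0 by (cases "enn2ereal pg") auto
    obtain c where c: "enn2ereal ph = ereal c"
      using php' a b by (cases "enn2ereal ph") (auto simp: enn2ereal_nonneg)
    have cab: "c \<le> a + b" using php' a b c by simp
    show ?thesis
    proof (cases "enn2ereal nh")
      case (real d)
      then show ?thesis using a b c cab by simp
    next
      case PInf
      then show ?thesis using a b c by simp
    next
      case MInf
      then show ?thesis using nh0 by simp
    qed
  qed
  then have "ext_expect M h \<le> ext_expect M g + ext_expect M t" unfolding eh eg et .
  then show ?thesis unfolding g_def t_def .
qed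

definition sball :: "(nat \<Rightarrow> 'a::metric_space \<Rightarrow> ereal) \<Rightarrow> real \<Rightarrow> nat \<Rightarrow> 'a \<Rightarrow> ereal" where
  "sball h \<delta> N x = Sup {h \<nu> \<zeta> | \<nu> \<zeta>. \<nu> \<ge> N \<and> dist \<zeta> x < \<delta>}"

lemma sball_mono:
  assumes "\<delta> \<le> \<delta>'" "N' \<le> N"
    and "\<And>\<zeta>. dist \<zeta> x < \<delta> \<Longrightarrow> dist \<zeta> x' < \<delta>'"
  shows "sball h \<delta> N x \<le> sball h \<delta>' N' x'"
  unfolding sball_def using assms
  by (intro Sup_subset_mono) (blast intro: le_trans)

lemma joint_limsup_eq:
  "joint_limsup h x = (INF \<delta>\<in>{0<..}. INF N. sball h \<delta> N x)"
proof -
  define r where "r \<delta> = (INF N. sball h \<delta> N x)" for \<delta>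
  have lim1: "lim (\<lambda>N. Sup {h \<nu> \<zeta> | \<nu> \<zeta>. \<nu> \<ge> N \<and> dist \<zeta> x < \<delta>}) = r \<delta>" for \<delta>
  proof -
    have "decseq (\<lambda>N. sball h \<delta> N x)"
      by (intro decseq_SucI sball_mono) auto
    then show ?thesis unfolding r_def sball_def[symmetric] by (intro limI LIMSEQ_INF)
  qed
  have rmono: "\<delta> \<le> \<delta>' \<Longrightarrow> r \<delta> \<le> r \<delta>'" for \<delta> \<delta>'
    unfolding r_def by (intro INF_mono) (auto intro!: sball_mono)
  have "(r \<longlongrightarrow> (INF \<delta>\<in>{0<..}. r \<delta>)) (at_right 0)"
  proof (rule order_tendstoI)
    fix a assume a: "a < (INF \<delta>\<in>{0<..}. r \<delta>)"
    show "\<forall>\<^sub>F \<delta> in at_right 0. a < r \<delta>"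
      using eventually_at_right_less[of "0::real"]
    proof eventually_elim
      case (elim \<delta>)
      then show ?case using a by (meson INF_lower greaterThan_iff less_le_trans)
    qed
  next
    fix a assume a: "(INF \<delta>\<in>{0<..}. r \<delta>) < a"
    then obtain \<delta>0 where d0: "\<delta>0 > 0" "r \<delta>0 < a" by (auto simp: INF_less_iff)
    show "\<forall>\<^sub>F \<delta> in at_right 0. r \<delta> < a"
      unfolding eventually_at_right_field using d0
      by (intro exI[of _ \<delta>0]) (auto intro: le_less_trans[OF rmono] less_imp_le)
  qed
  then show ?thesis
    unfolding joint_limsup_def lim1 r_def[symmetric]
    by (intro tendsto_Lim) auto
qed

lemma sball_le:
  assumes "\<And>\<nu> x. g \<nu> x \<le> c"
  shows "sball g \<delta> N x \<le> c"
  unfolding sball_def using assms by (auto intro!: Sup_least)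

lemma sball_ge:
  assumes "\<delta> > 0" "N \<le> \<nu>"
  shows "g \<nu> x \<le> sball g \<delta> N x"
  unfolding sball_def using assms by (intro Sup_upper) force

lemma psi_exists:
  fixes g :: "nat \<Rightarrow> 'a::metric_space \<Rightarrow> ereal" and K :: real and m :: nat
  assumes gK: "\<And>\<nu> x. g \<nu> x \<le> ereal K" and K: "K > 0"
  shows "\<exists>\<psi>::'a \<Rightarrow> real. continuous_on UNIV \<psi> \<and> (\<forall>x. - real m \<le> \<psi> x \<and> \<psi> x \<le> K)
     \<and> (\<forall>\<nu> x. m \<le> \<nu> \<longrightarrow> g \<nu> x \<le> ereal (\<psi> x))
     \<and> (\<forall>x. ereal (\<psi> x) \<le> max (sball g (2 / (real m + 1)) m x) (ereal (- real m)))"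
proof -
  define \<delta> where "\<delta> = 1 / (real m + 1)"
  have \<delta>: "\<delta> > 0" unfolding \<delta>_def by simp
  have d2: "2 / (real m + 1) = 2 * \<delta>" unfolding \<delta>_def by simp
  define v where "v y = max (sball g \<delta> m y) (ereal (- real m))" for y
  define u where "u y = real_of_ereal (v y)" for y
  have vK: "v y \<le> ereal K" for y
    unfolding v_def using K by (auto intro!: sball_le gK)
  have vm: "ereal (- real m) \<le> v y" for y unfolding v_def by simp
  have vu: "v y = ereal (u y)" for y
    using vK[of y] vm[of y] unfolding u_def by (cases "v y") auto
  have uK: "u y \<le> K" and um: "- real m \<le> u y" for y
    using vK[of y] vm[of y] vu[of y] by auto
  define L where "L = (K + real m) / \<delta>"
  have L0: "L \<ge> 0" unfolding L_def using K \<delta> by simp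
  have L\<delta>: "L * \<delta> = K + real m" unfolding L_def using \<delta> by simp
  define \<psi> where "\<psi> x = (SUP y. u y - L * dist x y)" for x
  have bdd: "bdd_above (range (\<lambda>y. u y - L * dist x y))" for x
    by (rule bdd_aboveI2[where M=K]) (use uK L0 in \<open>smt (verit) mult_nonneg_nonneg zero_le_dist\<close>)
  have psi_ge: "u x \<le> \<psi> x" for x
    unfolding \<psi>_def using cSUP_upper[OF UNIV_I bdd[of x], of x] by simp
  have psi_le: "\<psi> x \<le> K" for x
    unfolding \<psi>_def by (rule cSUP_least) (use uK L0 in \<open>auto intro: order_trans[OF _ uK] simp: mult_nonneg_nonneg\<close>, smt (verit) mult_nonneg_nonneg zero_le_dist)
  have lip1: "\<psi> x \<le> \<psi> x' + L * dist x x'" for x x'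
    unfolding \<psi>_def
  proof (rule cSUP_least)
    fix y
    have "dist x' y \<le> dist x' x + dist x y" by (rule dist_triangle)
    then have "L * dist x' y \<le> L * dist x y + L * dist x x'"
      using L0 by (metis add.commute dist_commute distrib_left mult_left_mono)
    then have "u y - L * dist x y \<le> (u y - L * dist x' y) + L * dist x x'" by simp
    also have "\<dots> \<le> (SUP y. u y - L * dist x' y) + L * dist x x'"
      using cSUP_upper[OF UNIV_I bdd[of x'], of y] by simp
    finally show "u y - L * dist x y \<le> (SUP y. u y - L * dist x' y) + L * dist x x'" .
  qed simp
  have cont: "continuous_on UNIV \<psi>"
  proof (rule lipschitz_on_continuous_on)
    show "lipschitz_on L UNIV \<psi>"
    proof (rule lipschitz_onI)
      fix x y :: 'a
      show "dist (\<psi> x) (\<psi> y) \<le> L * dist x y"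
        using lip1[of x y] lip1[of y x] by (simp add: dist_real_def dist_commute abs_le_iff)
    qed (rule L0)
  qed
  have gle: "g \<nu> x \<le> ereal (\<psi> x)" if "m \<le> \<nu>" for \<nu> x
  proof -
    have "g \<nu> x \<le> sball g \<delta> m x" by (rule sball_ge[OF \<delta> that])
    also have "\<dots> \<le> v x" unfolding v_def by simp
    also have "\<dots> \<le> ereal (\<psi> x)" unfolding vu using psi_ge by simp
    finally show ?thesis .
  qed
  have upper: "ereal (\<psi> x) \<le> max (sball g (2 * \<delta>) m x) (ereal (- real m))" for x
  proof -
    define B where "B = max (sball g (2 * \<delta>) m x) (ereal (- real m))"
    have BK: "B \<le> ereal K" unfolding B_def using K by (auto intro!: sball_le gK)
    have Bm: "ereal (- real m) \<le> B" unfolding B_def by simp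
    obtain b where b: "B = ereal b" using BK Bm by (cases B) auto
    have "\<psi> x \<le> b"
      unfolding \<psi>_def
    proof (rule cSUP_least)
      fix y
      show "u y - L * dist x y \<le> b"
      proof (cases "dist x y < \<delta>")
        case True
        have "sball g \<delta> m y \<le> sball g (2 * \<delta>) m x"
        proof (rule sball_mono)
          fix \<zeta> assume "dist \<zeta> y < \<delta>"
          moreover have "dist \<zeta> x \<le> dist \<zeta> y + dist y x" by (rule dist_triangle)
          ultimately show "dist \<zeta> x < 2 * \<delta>" using True by (simp add: dist_commute)
        qed (use \<delta> in auto)
        then have "v y \<le> B" unfolding v_def B_def by (auto intro: max.mono le_max_iff_disj[THEN iffD2])
        then have "u y \<le> b" using vu b by simp
        then show ?thesis using L0 by (smt (verit) mult_nonneg_nonneg zero_le_dist)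
      next
        case False
        then have "L * \<delta> \<le> L * dist x y" using L0 by (simp add: mult_left_mono)
        then show ?thesis using L\<delta> uK[of y] Bm b by simp
      qed
    qed simp
    then show ?thesis using b unfolding B_def by simp
  qed
  show ?thesis
    by (intro exI[of _ \<psi>] conjI allI impI cont gle) (use psi_le um psi_ge upper d2 in \<open>auto intro: order_trans\<close>)
qed

primrec mins :: "(nat \<Rightarrow> 'a \<Rightarrow> real) \<Rightarrow> nat \<Rightarrow> 'a \<Rightarrow> real" where
  "mins \<psi> 0 = \<psi> 0"
| "mins \<psi> (Suc m) = (\<lambda>x. min (mins \<psi> m x) (\<psi> (Suc m) x))"

lemma sball_mono_fun:
  assumes "\<And>\<nu> x. g \<nu> x \<le> h \<nu> x"
  shows "sball g \<delta> N x \<le> sball h \<delta> N x"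
  unfolding sball_def by (rule Sup_least) (auto intro!: Sup_upper2 assms)

lemma core:
  fixes g h :: "nat \<Rightarrow> 'a::metric_space \<Rightarrow> ereal" and K :: real
  assumes gh: "\<And>\<nu> x. g \<nu> x \<le> h \<nu> x" and gK: "\<And>\<nu> x. g \<nu> x \<le> ereal K" and K: "K > 0"
  shows "\<exists>\<phi>::nat \<Rightarrow> 'a \<Rightarrow> real. (\<forall>m. continuous_on UNIV (\<phi> m))
     \<and> (\<forall>m x. - real m \<le> \<phi> m x \<and> \<phi> m x \<le> K) \<and> (\<forall>m x. \<phi> (Suc m) x \<le> \<phi> m x)
     \<and> (\<forall>m \<nu> x. m \<le> \<nu> \<longrightarrow> g \<nu> x \<le> ereal (\<phi> m x))
     \<and> (\<forall>x. (INF m. ereal (\<phi> m x)) \<le> joint_limsup h x)"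
proof -
  define Q where "Q m (\<psi>::'a \<Rightarrow> real) \<longleftrightarrow> continuous_on UNIV \<psi> \<and> (\<forall>x. - real m \<le> \<psi> x \<and> \<psi> x \<le> K)
     \<and> (\<forall>\<nu> x. m \<le> \<nu> \<longrightarrow> g \<nu> x \<le> ereal (\<psi> x))
     \<and> (\<forall>x. ereal (\<psi> x) \<le> max (sball g (2 / (real m + 1)) m x) (ereal (- real m)))" for m \<psi>
  have "\<forall>m. \<exists>\<psi>. Q m \<psi>"
  proof
    fix m show "\<exists>\<psi>. Q m \<psi>" unfolding Q_def by (rule psi_exists[OF gK K])
  qed
  from choice[OF this] obtain \<psi> :: "nat \<Rightarrow> 'a \<Rightarrow> real" where Q: "\<And>m. Q m (\<psi> m)"
    by blast
  have c: "continuous_on UNIV (\<psi> m)" for m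
    using Q[of m] unfolding Q_def by (elim conjE)
  have b: "- real m \<le> \<psi> m x \<and> \<psi> m x \<le> K" for m x
    using Q[of m] unfolding Q_def by blast
  have gp: "g \<nu> x \<le> ereal (\<psi> m x)" if "m \<le> \<nu>" for m \<nu> x
    using Q[of m] that unfolding Q_def by blast
  have up: "ereal (\<psi> m x) \<le> max (sball g (2 / (real m + 1)) m x) (ereal (- real m))" for m x
    using Q[of m] unfolding Q_def by blast
  define \<phi> where "\<phi> = mins \<psi>"
  have c\<phi>: "continuous_on UNIV (\<phi> m)" for m
    unfolding \<phi>_def by (induction m) (auto intro!: continuous_on_min c)
  have b\<phi>: "- real m \<le> \<phi> m x \<and> \<phi> m x \<le> K" for m x
    unfolding \<phi>_def
  proof (induction m)
    case 0 show ?case using b[of 0 x] by simp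
  next
    case (Suc m) show ?case using Suc b[of "Suc m" x] by (auto simp: min_def)
  qed
  have d\<phi>: "\<phi> (Suc m) x \<le> \<phi> m x" for m x unfolding \<phi>_def by simp
  have le\<psi>: "\<phi> m x \<le> \<psi> m x" for m x unfolding \<phi>_def by (cases m) auto
  have g\<phi>: "m \<le> \<nu> \<longrightarrow> g \<nu> x \<le> ereal (\<phi> m x)" for m \<nu> x
    unfolding \<phi>_def
  proof (induction m)
    case 0 then show ?case using gp by simp
  next
    case (Suc m) then show ?case using gp[of "Suc m" \<nu> x] by auto
  qed
  have up2: "ereal (\<phi> m x) \<le> max (sball h (2 / (real m + 1)) m x) (ereal (- real m))" for m x
  proof -
    have "ereal (\<phi> m x) \<le> ereal (\<psi> m x)" using le\<psi> by simp
    also have "\<dots> \<le> max (sball g (2 / (real m + 1)) m x) (ereal (- real m))" by (rule up)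
    also have "\<dots> \<le> max (sball h (2 / (real m + 1)) m x) (ereal (- real m))"
      by (intro max.mono sball_mono_fun gh order_refl)
    finally show ?thesis .
  qed
  have inf: "(INF m. ereal (\<phi> m x)) \<le> joint_limsup h x" for x
  proof (rule dense_ge)
    fix a assume a: "joint_limsup h x < a"
    then obtain \<delta> where \<delta>: "\<delta> > 0" "(INF N. sball h \<delta> N x) < a"
      unfolding joint_limsup_eq by (auto simp: INF_less_iff)
    then obtain N where N: "sball h \<delta> N x < a" by (auto simp: INF_less_iff)
    have ainf: "a \<noteq> -\<infinity>" using a by auto
    define r where "r = (if a = \<infinity> then 0 else - real_of_ereal a)"
    obtain m :: nat where m: "max (max (real N) (2 / \<delta>)) r < real m"
      using reals_Archimedean2 by blast
    have m1: "N \<le> m" using m by simp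
    have "2 / \<delta> < real m" using m by simp
    then have "2 < real m * \<delta>" using \<delta>(1) by (simp add: field_simps)
    then have m2: "2 / (real m + 1) \<le> \<delta>" using \<delta>(1) by (simp add: field_simps)
    have "sball h (2 / (real m + 1)) m x \<le> sball h \<delta> N x"
      by (rule sball_mono) (use m1 m2 in auto)
    then have s: "sball h (2 / (real m + 1)) m x < a" using N by simp
    have "ereal (- real m) < a"
    proof (cases a)
      case (real q)
      then show ?thesis using m unfolding r_def by auto
    qed (use ainf in auto)
    then have "max (sball h (2 / (real m + 1)) m x) (ereal (- real m)) < a" using s by simp
    then have "ereal (\<phi> m x) < a" using up2[of m x] by (rule le_less_trans[rotated])
    then show "(INF m. ereal (\<phi> m x)) \<le> a" by (meson INF_lower UNIV_I order.trans less_imp_le)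
  qed
  show ?thesis
    by (intro exI[of _ \<phi>] conjI allI c\<phi> b\<phi> d\<phi> g\<phi> inf)
qed

theorem corollary3p6:
  fixes Pn :: "nat \<Rightarrow> 'a::metric_space measure"
    and P :: "'a measure"
    and h :: "nat \<Rightarrow> 'a \<Rightarrow> ereal"
  assumes "\<And>\<nu>. prob_space (Pn \<nu>)"
    and "\<And>\<nu>. sets (Pn \<nu>) = sets borel"
    and "prob_space P"
    and "sets P = sets borel"
    and "weak_conv Pn P"
    and "\<And>\<nu>. h \<nu> \<in> borel_measurable borel"
    and "Limsup at_top (\<lambda>K::real. limsup (\<lambda>\<nu>.
           ext_expect (Pn \<nu>) (\<lambda>\<xi>. if h \<nu> \<xi> \<ge> ereal K then h \<nu> \<xi> else 0))) = 0"
  shows "limsup (\<lambda>\<nu>. ext_expect (Pn \<nu>) (h \<nu>)) \<le> ext_expect P (joint_limsup h)"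
proof (rule ereal_le_epsilon2)
  fix \<epsilon> :: real assume \<epsilon>: "0 < \<epsilon>"
  define t where "t K \<nu> = ext_expect (Pn \<nu>) (\<lambda>\<xi>. if h \<nu> \<xi> \<ge> ereal K then h \<nu> \<xi> else 0)" for K \<nu>
  have "Limsup at_top (\<lambda>K::real. limsup (t K)) < ereal \<epsilon>"
    using assms(7) \<epsilon> unfolding t_def by simp
  then have "eventually (\<lambda>K. limsup (t K) < ereal \<epsilon>) at_top" by (rule Limsup_lessD)
  then obtain K0 :: real where K0: "\<And>K. K \<ge> K0 \<Longrightarrow> limsup (t K) < ereal \<epsilon>"
    unfolding eventually_at_top_linorder by blast
  define K where "K = max K0 1"
  have K: "K > 0" and TK: "limsup (t K) < ereal \<epsilon>" using K0[of K] unfolding K_def by auto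
  define g where "g \<nu> x = min (h \<nu> x) (ereal K)" for \<nu> x
  have "\<exists>\<phi>::nat \<Rightarrow> 'a \<Rightarrow> real. (\<forall>m. continuous_on UNIV (\<phi> m))
     \<and> (\<forall>m x. - real m \<le> \<phi> m x \<and> \<phi> m x \<le> K) \<and> (\<forall>m x. \<phi> (Suc m) x \<le> \<phi> m x)
     \<and> (\<forall>m \<nu> x. m \<le> \<nu> \<longrightarrow> g \<nu> x \<le> ereal (\<phi> m x))
     \<and> (\<forall>x. (INF m. ereal (\<phi> m x)) \<le> joint_limsup h x)"
    by (rule core) (auto simp: g_def K)
  then obtain \<phi> :: "nat \<Rightarrow> 'a \<Rightarrow> real" where
    c\<phi>: "\<And>m. continuous_on UNIV (\<phi> m)" and
    b\<phi>: "\<And>m x. - real m \<le> \<phi> m x \<and> \<phi> m x \<le> K" and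
    d\<phi>: "\<And>m x. \<phi> (Suc m) x \<le> \<phi> m x" and
    g\<phi>: "\<And>m \<nu> x. m \<le> \<nu> \<Longrightarrow> g \<nu> x \<le> ereal (\<phi> m x)" and
    i\<phi>: "\<And>x. (INF m. ereal (\<phi> m x)) \<le> joint_limsup h x"
    by metis
  have m\<phi>: "\<phi> m \<in> borel_measurable borel" for m by (rule borel_measurable_continuous_onI[OF c\<phi>])
  have normb: "norm (\<phi> m x) \<le> K + real m" for m x using b\<phi>[of m x] K by (simp add: abs_le_iff)
  have intPn: "integrable (Pn \<nu>) (\<phi> m)" for \<nu> m
  proof -
    interpret prob_space "Pn \<nu>" by (rule assms(1))
    show ?thesis
      by (rule integrable_const_bound[where B="K + real m"])
         (use normb in auto, subst measurable_cong_sets[OF assms(2)[of \<nu>] refl], rule m\<phi>)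
  qed
  have intP: "integrable P (\<phi> m)" for m
  proof -
    interpret prob_space P by (rule assms(3))
    show ?thesis
      by (rule integrable_const_bound[where B="K + real m"])
         (use normb in auto, subst measurable_cong_sets[OF assms(4) refl], rule m\<phi>)
  qed
  have bnd: "bounded (range (\<phi> m))" for m
    unfolding bounded_real using normb by (intro exI[of _ "K + real m"]) auto
  have conv: "(\<lambda>\<nu>. ereal (\<integral>x. \<phi> m x \<partial>(Pn \<nu>))) \<longlonglongrightarrow> ereal (\<integral>x. \<phi> m x \<partial>P)" for m
    using assms(5) c\<phi> bnd unfolding weak_conv_def by (intro tendsto_ereal) blast
  have hm: "h \<nu> \<in> borel_measurable (Pn \<nu>)" for \<nu>
    using assms(6) measurable_cong_sets[OF assms(2)[of \<nu>] refl] by auto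
  have step: "limsup (\<lambda>\<nu>. ext_expect (Pn \<nu>) (h \<nu>)) \<le> ereal (\<integral>x. \<phi> m x \<partial>P) + ereal \<epsilon>" for m
  proof -
    have ev: "\<forall>\<^sub>F \<nu> in sequentially. ext_expect (Pn \<nu>) (h \<nu>) \<le> ereal (\<integral>x. \<phi> m x \<partial>(Pn \<nu>)) + t K \<nu>"
      unfolding eventually_sequentially
    proof (intro exI[of _ m] allI impI)
      fix \<nu> assume "m \<le> \<nu>"
      have "ext_expect (Pn \<nu>) (h \<nu>) \<le> ext_expect (Pn \<nu>) (g \<nu>) + t K \<nu>"
        unfolding g_def t_def by (rule ext_expect_split[OF assms(1) hm K])
      also have "ext_expect (Pn \<nu>) (g \<nu>) \<le> ext_expect (Pn \<nu>) (\<lambda>x. ereal (\<phi> m x))"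
        by (rule ext_expect_mono) (rule g\<phi>[OF \<open>m \<le> \<nu>\<close>])
      also have "\<dots> = ereal (\<integral>x. \<phi> m x \<partial>(Pn \<nu>))" by (rule ext_expect_real[OF intPn])
      finally show "ext_expect (Pn \<nu>) (h \<nu>) \<le> ereal (\<integral>x. \<phi> m x \<partial>(Pn \<nu>)) + t K \<nu>"
        by (simp add: add_right_mono)
    qed
    have "limsup (\<lambda>\<nu>. ext_expect (Pn \<nu>) (h \<nu>)) \<le> limsup (\<lambda>\<nu>. ereal (\<integral>x. \<phi> m x \<partial>(Pn \<nu>)) + t K \<nu>)"
      by (rule Limsup_mono[OF ev])
    also have "\<dots> \<le> limsup (\<lambda>\<nu>. ereal (\<integral>x. \<phi> m x \<partial>(Pn \<nu>))) + limsup (t K)"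
      by (rule ereal_limsup_add_mono)
    also have "limsup (\<lambda>\<nu>. ereal (\<integral>x. \<phi> m x \<partial>(Pn \<nu>))) = ereal (\<integral>x. \<phi> m x \<partial>P)"
      by (rule lim_imp_Limsup[OF _ conv]) simp
    also have "ereal (\<integral>x. \<phi> m x \<partial>P) + limsup (t K) \<le> ereal (\<integral>x. \<phi> m x \<partial>P) + ereal \<epsilon>"
      using TK by (intro add_left_mono) simp
    finally show ?thesis .
  qed
  have lim: "(\<lambda>m. ext_expect P (\<lambda>x. ereal (\<phi> m x))) \<longlonglongrightarrow> ext_expect P (\<lambda>x. INF m. ereal (\<phi> m x))"
  proof (rule ext_expect_decseq)
    show "(\<lambda>x. ereal (\<phi> m x)) \<in> borel_measurable P" for m
      by (subst measurable_cong_sets[OF assms(4) refl]) (intro borel_measurable_ereal m\<phi>)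
    show "ereal (\<phi> (Suc m) x) \<le> ereal (\<phi> m x)" for m x using d\<phi> by simp
    have "(\<integral>\<^sup>+x. e2ennreal (max (ereal (\<phi> 0 x)) 0) \<partial>P) \<le> (\<integral>\<^sup>+x. ennreal K \<partial>P)"
    proof (intro nn_integral_mono)
      fix x
      have "max (ereal (\<phi> 0 x)) 0 \<le> ereal K" using b\<phi>[of 0 x] K by simp
      then show "e2ennreal (max (ereal (\<phi> 0 x)) 0) \<le> ennreal K"
        using e2ennreal_mono by fastforce
    qed
    also have "\<dots> = ennreal K" using assms(3) by (simp add: prob_space.emeasure_space_1)
    finally have "(\<integral>\<^sup>+x. e2ennreal (max (ereal (\<phi> 0 x)) 0) \<partial>P) \<le> ennreal K" .
    then show "(\<integral>\<^sup>+x. e2ennreal (max (ereal (\<phi> 0 x)) 0) \<partial>P) < \<infinity>"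
      using ennreal_less_top[of K] unfolding infinity_ennreal_def by (rule le_less_trans)
  qed
  have eqr: "ext_expect P (\<lambda>x. ereal (\<phi> m x)) = ereal (\<integral>x. \<phi> m x \<partial>P)" for m
    by (rule ext_expect_real[OF intP])
  have lim2: "(\<lambda>m. ereal (\<integral>x. \<phi> m x \<partial>P) + ereal \<epsilon>) \<longlonglongrightarrow> ext_expect P (\<lambda>x. INF m. ereal (\<phi> m x)) + ereal \<epsilon>"
    by (rule tendsto_add_ereal_general) (use lim[unfolded eqr] in auto)
  have "limsup (\<lambda>\<nu>. ext_expect (Pn \<nu>) (h \<nu>)) \<le> ext_expect P (\<lambda>x. INF m. ereal (\<phi> m x)) + ereal \<epsilon>"
    by (rule LIMSEQ_le_const[OF lim2]) (use step in auto)
  also have "\<dots> \<le> ext_expect P (joint_limsup h) + ereal \<epsilon>"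
    by (intro add_right_mono ext_expect_mono i\<phi>)
  finally show "limsup (\<lambda>\<nu>. ext_expect (Pn \<nu>) (h \<nu>)) \<le> ext_expect P (joint_limsup h) + ereal \<epsilon>" .
qed

end
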